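(* Let $\pi$ be a permutation of $[n]$ with run decomposition $(D^{(0)}_\pi,A^{(1)}_\pi,D^{(1)}_\pi,A^{(2)}_\pi,\ldots)$, and let $r=\mathsf{minrec}(\pi)$. Then for each $i\in[1,n]$, \[ r_i=\begin{cases}|\{j\in A^{(k)}_\pi: j>i,\ k>\ell\}| & \text{if } i\in D^{(\ell)}_\pi,\\ |\{j\in D^{(k)}_\pi: j<i,\ k\ge \ell\}| & \text{if } i\in A^{(\ell)}_\pi.\end{cases} \]
   Context: Permutations: for a permutation $\pi=\pi_1\cdots\pi_n$ of $[n]$, $\pi_i$ is an ascent top if $i=1$ or $\pi_{i-1}<\pi_i$, a descent bottom if $\pi_{i-1}>\pi_i$. The run decomposition $\mathsf{RunDec}(\pi)=(D^{(0)}_\pi,A^{(1)}_\pi,D^{(1)}_\pi,A^{(2)}_\pi,\ldots)$ consists of $D^{(0)}_\pi=\{0\}$ followed by the letter sets of the maximal factors of $\pi$ consisting alternately of ascent tops ($A$-blocks) and descent bottoms ($D$-blocks). Ferrers diagrams and graphs: a Ferrers diagram $F$ (English convention) of semiperimeter $n+1$ has rows and columns labeled by $0,\ldots,n$: the $n+1$ unit steps of its south-east boundary path, traversed from top-right to bottom-left, are labeled $0,\ldots,n$; a vertical step labels the row it bounds, a horizontal step the column it bounds (top row labeled $0$). $\mathsf{rows}(F)$, $\mathsf{cols}(F)$ are the label sets; $F$ has a cell in row $i$, column $j$ iff $i<j$. $G(F)$ has vertex set $\{0,\ldots,n\}$ with edges $\{i,j\}$ for $i\in\mathsf{rows}(F)$,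 $j\in\mathsf{cols}(F)$, $i<j$. Sandpile model on $G(F)$ with sink $0$: configurations $c\in\mathbb{N}^n$; non-sink $v$ unstable if $c_v\ge\deg(v)$; toppling sends one grain to each neighbour (grains to $0$ disappear); toppling the sink adds one grain to each neighbour of $0$. Canonical toppling of a recurrent $c$: topple the sink ($U^{(0)}_c=\{0\}$), then alternately topple simultaneously all unstable vertices in $\mathsf{cols}(F)$ ($V^{(1)}_c$), all unstable in $\mathsf{rows}(F)$ ($U^{(1)}_c$), etc., giving the ordered partition $\mathsf{CanonTop}(c)=(U^{(0)}_c,V^{(1)}_c,U^{(1)}_c,\ldots)$ of $\{0,\ldots,n\}$. EW-tableaux: $0/1$-fillings $T$ of $F$ with top row all 1s, a 0 in every other row, and no rectangle with 0s in two diagonally opposite corners and 1s in the other two; $\mathsf{EWtab}(F)$ is their set. $\phi_{TC}(T)$ is the configuration on $G(F)$ with $c_i$ = number of 1s in row $i$ ($i\in\mathsf{rows}(F)$), $c_i$ = number of 0s in column $i$ ($i\in\mathsf{cols}(F)$); it is a minimal recurrent configuration. With $\mathsf{CanonTop}(T):=\mathsf{CanonTop}(\phi_{TC}(T))=(U^{(0)}_T,V^{(1)}_T,U^{(1)}_T,\ldots)$, $\Psi(T)$ is the word $\mathsf{inc}(V^{(1)}_T)\,\mathsf{dec}(U^{(1)}_T)\,\mathsf{inc}(V^{(2)}_T)\cdots$; $\Psi$ is a (known) bijection from $\mathsf{EWtab}(F)$ onto the permutations of $[n]$ whose set of descent bottoms is $\mathsf{rows}(F)\setminus\{0\}$. For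 a permutation $\pi$ of $[n]$, let $F$ be the Ferrers diagram of semiperimeter $n+1$ with $\mathsf{rows}(F)=\{0\}\cup\{\text{descent bottoms of }\pi\}$, and define $\mathsf{minrec}(\pi):=\phi_{TC}(\Psi^{-1}(\pi))$, a configuration on $G(F)$. *)

theory Defs
  imports Main
begin

text \<open>Position p (0-based) holds an ascent top iff p = 0 or the previous letter is smaller;
  otherwise it holds a descent bottom.\<close>
definition asc_top :: "nat list \<Rightarrow> nat \<Rightarrow> bool" where
  "asc_top w p \<longleftrightarrow> p = 0 \<or> w ! (p - 1) < w ! p"

text \<open>Number of changes of type (ascent top / descent bottom) among positions 0..p;
  this counts how many maximal factors precede the one containing position p.\<close>
definition run_changes :: "nat list \<Rightarrow> nat \<Rightarrow> nat" where
  "run_changes w p = card {q. 1 \<le> q \<and> q \<le> p \<and> asc_top w q \<noteq> asc_top w (q - 1)}"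

text \<open>A^(k) (k >= 1): letters of the k-th maximal factor of ascent tops.\<close>
definition A_block :: "nat list \<Rightarrow> nat \<Rightarrow> nat set" where
  "A_block w k = {w ! p | p. p < length w \<and> asc_top w p \<and> run_changes w p div 2 + 1 = k}"

text \<open>D^(0) = {0}; D^(k) (k >= 1): letters of the k-th maximal factor of descent bottoms.\<close>
definition D_block :: "nat list \<Rightarrow> nat \<Rightarrow> nat set" where
  "D_block w k = (if k = 0 then {0} else
     {w ! p | p. p < length w \<and> \<not> asc_top w p \<and> (run_changes w p + 1) div 2 = k})"

section \<open>Ferrers diagrams (given by their row label set R, semiperimeter n+1) and G(F)\<close>

definition fcols :: "nat set \<Rightarrow> nat \<Rightarrow> nat set" where
  "fcols R n = {0..n} - R"

definition cell :: "nat set \<Rightarrow> nat \<Rightarrow> nat \<Rightarrow> nat \<Rightarrow> bool" where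
  "cell R n i j \<longleftrightarrow> i \<in> R \<and> j \<in> fcols R n \<and> i < j"

definition adj :: "nat set \<Rightarrow> nat \<Rightarrow> nat \<Rightarrow> nat \<Rightarrow> bool" where
  "adj R n u v \<longleftrightarrow> cell R n u v \<or> cell R n v u"

definition deg :: "nat set \<Rightarrow> nat \<Rightarrow> nat \<Rightarrow> nat" where
  "deg R n v = card {u. u \<le> n \<and> adj R n u v}"

section \<open>Sandpile model on G(F) with sink 0; configurations are functions on [n] (0 elsewhere)\<close>

definition sink_topple :: "nat set \<Rightarrow> nat \<Rightarrow> (nat \<Rightarrow> nat) \<Rightarrow> (nat \<Rightarrow> nat)" where
  "sink_topple R n c = (\<lambda>v. if v \<in> {1..n} then c v + (if adj R n 0 v then 1 else 0) else 0)"

definition topple_set :: "nat set \<Rightarrow> nat \<Rightarrow> nat set \<Rightarrow> (nat \<Rightarrow> nat) \<Rightarrow> (nat \<Rightarrow> nat)" where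
  "topple_set R n S c = (\<lambda>v. if v \<in> {1..n}
     then c v - (if v \<in> S then deg R n v else 0) + card {u \<in> S. adj R n u v} else 0)"

definition phase_set :: "nat set \<Rightarrow> nat \<Rightarrow> (nat \<Rightarrow> nat) \<Rightarrow> nat \<Rightarrow> nat set" where
  "phase_set R n c k = {v \<in> {1..n}. (if odd k then v \<in> fcols R n else v \<in> R)
                                     \<and> deg R n v \<le> c v}"

primrec canon_conf :: "nat set \<Rightarrow> nat \<Rightarrow> (nat \<Rightarrow> nat) \<Rightarrow> nat \<Rightarrow> (nat \<Rightarrow> nat)" where
  "canon_conf R n c 0 = sink_topple R n c"
| "canon_conf R n c (Suc k) =
     topple_set R n (phase_set R n (canon_conf R n c k) (Suc k)) (canon_conf R n c k)"

text \<open>canon_top R n c 0 = U^(0) = {0}; canon_top R n c (2k-1) = V^(k); canon_top R n c (2k) = U^(k).\<close>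
definition canon_top :: "nat set \<Rightarrow> nat \<Rightarrow> (nat \<Rightarrow> nat) \<Rightarrow> nat \<Rightarrow> nat set" where
  "canon_top R n c k = (if k = 0 then {0} else phase_set R n (canon_conf R n c (k - 1)) k)"

text \<open>A 0/1 filling is a predicate T (True = 1) which is False outside the cells of F.\<close>
definition EWtab :: "nat set \<Rightarrow> nat \<Rightarrow> (nat \<Rightarrow> nat \<Rightarrow> bool) set" where
  "EWtab R n = {T.
     (\<forall>i j. T i j \<longrightarrow> cell R n i j)
   \<and> (\<forall>j. cell R n 0 j \<longrightarrow> T 0 j)
   \<and> (\<forall>i \<in> R - {0}. \<exists>j. cell R n i j \<and> \<not> T i j)
   \<and> (\<forall>i1 i2 j1 j2. i1 < i2 \<and> j1 < j2 \<and> cell R n i1 j1 \<and> cell R n i1 j2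
         \<and> cell R n i2 j1 \<and> cell R n i2 j2 \<longrightarrow>
        \<not> (\<not> T i1 j1 \<and> \<not> T i2 j2 \<and> T i1 j2 \<and> T i2 j1)
      \<and> \<not> (\<not> T i1 j2 \<and> \<not> T i2 j1 \<and> T i1 j1 \<and> T i2 j2))}"

definition phi_TC :: "nat set \<Rightarrow> nat \<Rightarrow> (nat \<Rightarrow> nat \<Rightarrow> bool) \<Rightarrow> (nat \<Rightarrow> nat)" where
  "phi_TC R n T = (\<lambda>v. if v \<in> {1..n} then
     (if v \<in> R then card {j. cell R n v j \<and> T v j} else card {i. cell R n i v \<and> \<not> T i v})
     else 0)"

text \<open>The word inc(V^(1)) dec(U^(1)) inc(V^(2)) ...; phases beyond 2n+2 are empty.\<close>
definition canon_word :: "nat set \<Rightarrow> nat \<Rightarrow> (nat \<Rightarrow> nat) \<Rightarrow> nat list" where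
  "canon_word R n c = concat (map (\<lambda>k. if odd k then sorted_list_of_set (canon_top R n c k)
                                      else rev (sorted_list_of_set (canon_top R n c k)))
                                 [1..<2 * n + 3])"

definition Psi :: "nat set \<Rightarrow> nat \<Rightarrow> (nat \<Rightarrow> nat \<Rightarrow> bool) \<Rightarrow> nat list" where
  "Psi R n T = canon_word R n (phi_TC R n T)"

text \<open>rows(F) for the permutation: {0} together with its descent bottoms.\<close>
definition perm_rows :: "nat list \<Rightarrow> nat set" where
  "perm_rows w = insert 0 {w ! p | p. p < length w \<and> \<not> asc_top w p}"

definition minrec :: "nat \<Rightarrow> nat list \<Rightarrow> (nat \<Rightarrow> nat)" where
  "minrec n w = phi_TC (perm_rows w) n
     (THE T. T \<in> EWtab (perm_rows w) n \<and> Psi (perm_rows w) n T = w)"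

end

theory Submission
  imports Defs
begin


definition vtyp :: "nat set \<Rightarrow> nat \<Rightarrow> nat \<Rightarrow> nat \<Rightarrow> bool" where
 "vtyp R n k v \<longleftrightarrow> (if odd k then v \<in> fcols R n else v \<in> R)"

definition Xs :: "nat set \<Rightarrow> nat \<Rightarrow> (nat \<Rightarrow> nat) \<Rightarrow> nat \<Rightarrow> nat set" where
 "Xs R n c m = insert 0 (\<Union>k\<in>{1..m}. canon_top R n c k)"

lemma canon_top_Suc: "canon_top R n c (Suc m) = phase_set R n (canon_conf R n c m) (Suc m)"
  by (simp add: canon_top_def)

lemma canon_top_sub: "k \<ge> 1 \<Longrightarrow> canon_top R n c k \<subseteq> {1..n}"
  by (auto simp: canon_top_def phase_set_def)

lemma canon_top_typ: "k \<ge> 1 \<Longrightarrow> v \<in> canon_top R n c k \<Longrightarrow> vtyp R n k v"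
  by (auto simp: canon_top_def phase_set_def vtyp_def split: if_splits)

lemma Xs_sub: "Xs R n c m \<subseteq> {0..n}"
  using canon_top_sub[of _ R n c] by (fastforce simp: Xs_def)

lemma Xs_0: "Xs R n c 0 = {0}"
  by (simp add: Xs_def)

lemma Xs_Suc: "Xs R n c (Suc m) = Xs R n c m \<union> canon_top R n c (Suc m)"
  by (auto simp: Xs_def atLeastAtMostSuc_conv)

lemma adj_le: "adj R n u v \<Longrightarrow> u \<le> n"
  by (auto simp: adj_def cell_def fcols_def)

lemma deg_alt: "deg R n v = card {u. adj R n u v}"
  unfolding deg_def by (metis adj_le)

lemma finite_adj: "finite {u. adj R n u v}"
  by (rule finite_subset[of _ "{0..n}"]) (auto dest: adj_le)

lemma card_adj_le: "card {u \<in> Xs R n c m. adj R n u v} \<le> deg R n v"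
  unfolding deg_alt by (rule card_mono[OF finite_adj]) auto

lemma vtyp_nonadj: "vtyp R n k u \<Longrightarrow> vtyp R n k v \<Longrightarrow> \<not> adj R n u v"
  by (auto simp: vtyp_def adj_def cell_def fcols_def split: if_splits)

locale stab =
  fixes R :: "nat set" and n :: nat and c :: "nat \<Rightarrow> nat"
  assumes stable: "\<And>v. v \<in> {1..n} \<Longrightarrow> c v < deg R n v"
begin

abbreviation "INV m \<equiv> (\<forall>v\<in>{1..n}. canon_conf R n c m v + (if v \<in> Xs R n c m then deg R n v else 0)
     = c v + card {u \<in> Xs R n c m. adj R n u v})"

lemma char_inv:
  assumes "INV m"
  shows "canon_top R n c (Suc m) = {v \<in> {1..n}. vtyp R n (Suc m) v \<and> v \<notin> Xs R n c m
           \<and> deg R n v \<le> c v + card {u \<in> Xs R n c m. adj R n u v}}" (is "?L = ?R")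
proof (intro set_eqI iffI)
  fix v assume v: "v \<in> ?L"
  hence v1: "v \<in> {1..n}" and dv: "deg R n v \<le> canon_conf R n c m v"
    by (auto simp: canon_top_Suc phase_set_def)
  have ty: "vtyp R n (Suc m) v" using canon_top_typ v by auto
  have eq: "canon_conf R n c m v + (if v \<in> Xs R n c m then deg R n v else 0)
     = c v + card {u \<in> Xs R n c m. adj R n u v}" using assms v1 by blast
  have "v \<notin> Xs R n c m"
  proof
    assume "v \<in> Xs R n c m"
    with eq card_adj_le[of R n c m v] have "canon_conf R n c m v \<le> c v" by simp
    with dv stable[OF v1] show False by simp
  qed
  with eq dv v1 ty show "v \<in> ?R" by simp
next
  fix v assume v: "v \<in> ?R"
  hence v1: "v \<in> {1..n}" by simp
  have eq: "canon_conf R n c m v + (if v \<in> Xs R n c m then deg R n v else 0)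
     = c v + card {u \<in> Xs R n c m. adj R n u v}" using assms v1 by blast
  with v show "v \<in> ?L"
    by (auto simp: canon_top_Suc phase_set_def vtyp_def split: if_splits)
qed

lemma inv: "INV m"
proof (induction m)
  case 0
  show ?case
  proof
    fix v assume v: "v \<in> {1..n}"
    have "{u \<in> {0::nat}. adj R n u v} = (if adj R n 0 v then {0} else {})" by auto
    with v show "canon_conf R n c 0 v + (if v \<in> Xs R n c 0 then deg R n v else 0)
     = c v + card {u \<in> Xs R n c 0. adj R n u v}"
      by (simp add: Xs_0 sink_topple_def)
  qed
next
  case (Suc m)
  note ch = char_inv[OF Suc]
  let ?P = "canon_top R n c (Suc m)"
  let ?X = "Xs R n c m"
  have disj: "?P \<inter> ?X = {}" using ch by auto
  show ?case
  proof
    fix v assume v: "v \<in> {1..n}"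
    have eq: "canon_conf R n c m v + (if v \<in> ?X then deg R n v else 0)
     = c v + card {u \<in> ?X. adj R n u v}" using Suc v by blast
    have fX: "finite {u \<in> ?X. adj R n u v}"
      by (rule finite_subset[OF _ finite_atLeastAtMost[of 0 n]]) (use Xs_sub in blast)
    have fP: "finite {u \<in> ?P. adj R n u v}"
      by (rule finite_subset[OF _ finite_atLeastAtMost[of 1 n]]) (use canon_top_sub[of "Suc m" R n c] in auto)
    have cu: "card {u \<in> ?X \<union> ?P. adj R n u v} = card {u \<in> ?X. adj R n u v} + card {u \<in> ?P. adj R n u v}"
    proof -
      have "{u \<in> ?X \<union> ?P. adj R n u v} = {u \<in> ?X. adj R n u v} \<union> {u \<in> ?P. adj R n u v}" by auto
      moreover have "{u \<in> ?X. adj R n u v} \<inter> {u \<in> ?P. adj R n u v} = {}" using disj by auto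
      ultimately show ?thesis using card_Un_disjoint[OF fX fP] by simp
    qed
    have cc: "canon_conf R n c (Suc m) v = canon_conf R n c m v - (if v \<in> ?P then deg R n v else 0)
         + card {u \<in> ?P. adj R n u v}"
      using v by (simp add: topple_set_def canon_top_Suc)
    show "canon_conf R n c (Suc m) v + (if v \<in> Xs R n c (Suc m) then deg R n v else 0)
     = c v + card {u \<in> Xs R n c (Suc m). adj R n u v}"
    proof (cases "v \<in> ?P")
      case True
      hence "v \<notin> ?X" "deg R n v \<le> canon_conf R n c m v" using disj
        by (auto simp: canon_top_Suc phase_set_def)
      with eq cc cu True show ?thesis by (simp add: Xs_Suc)
    next
      case False
      with eq cc cu show ?thesis by (simp add: Xs_Suc)
    qed
  qed
qed

lemmas char = char_inv[OF inv]

lemma empty_next: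
  assumes "canon_top R n c (Suc m) = {}"
  shows "canon_top R n c (Suc (Suc m)) = {}"
proof (rule ccontr)
  assume "canon_top R n c (Suc (Suc m)) \<noteq> {}"
  then obtain v where v: "v \<in> canon_top R n c (Suc (Suc m))" by auto
  have X: "Xs R n c (Suc m) = Xs R n c m" using assms by (simp add: Xs_Suc)
  from v[unfolded char[of "Suc m"] X] have v1: "v \<in> {1..n}" and ty: "vtyp R n (Suc (Suc m)) v"
    and nX: "v \<notin> Xs R n c m" and dg: "deg R n v \<le> c v + card {u \<in> Xs R n c m. adj R n u v}"
    by auto
  show False
  proof (cases m)
    case 0
    have "{u \<in> Xs R n c m. adj R n u v} = {}" using ty 0
      by (auto simp: Xs_0 vtyp_def adj_def cell_def fcols_def)
    with dg stable[OF v1] show False by simp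
  next
    case (Suc m')
    have ty': "vtyp R n (Suc m') v" using ty Suc by (simp add: vtyp_def)
    have "{u \<in> Xs R n c m. adj R n u v} = {u \<in> Xs R n c m'. adj R n u v}"
      using Suc vtyp_nonadj[OF canon_top_typ[of "Suc m'" _ R n c] ty'] by (auto simp: Xs_Suc)
    moreover have "v \<notin> Xs R n c m'" using nX Suc by (simp add: Xs_Suc)
    ultimately have "v \<in> canon_top R n c (Suc m')" using v1 ty' dg by (simp add: char[of m'])
    with nX Suc show False by (simp add: Xs_Suc)
  qed
qed

lemma empty_later:
  assumes "canon_top R n c k = {}" "1 \<le> k" "k \<le> k'"
  shows "canon_top R n c k' = {}"
  using assms(3,1,2)
proof (induction k' rule: dec_induct)
  case base thus ?case by simp
next
  case (step k')
  then obtain m where "k' = Suc m" by (cases k') auto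
  with step empty_next show ?case by simp
qed

end


definition Lw :: "nat set \<Rightarrow> nat \<Rightarrow> (nat \<Rightarrow> nat) \<Rightarrow> nat \<Rightarrow> nat list" where
 "Lw R n c k = (if odd k then sorted_list_of_set (canon_top R n c k)
                 else rev (sorted_list_of_set (canon_top R n c k)))"

lemma canon_word_Lw: "canon_word R n c = concat (map (Lw R n c) [1..<2*n+3])"
  unfolding canon_word_def Lw_def[abs_def] by (rule refl)

lemma finite_canon_top: "k \<ge> 1 \<Longrightarrow> finite (canon_top R n c k)"
  by (rule finite_subset[OF canon_top_sub]) simp_all

lemma set_Lw: "k \<ge> 1 \<Longrightarrow> set (Lw R n c k) = canon_top R n c k"
  using finite_canon_top by (simp add: Lw_def)

lemma Lw_Nil: "k \<ge> 1 \<Longrightarrow> Lw R n c k = [] \<longleftrightarrow> canon_top R n c k = {}"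
  using set_Lw by (metis set_empty)

lemma takeWhile_blocks:
  "(\<forall>x\<in>set A. P x) \<Longrightarrow> (B = [] \<or> \<not> P (hd B)) \<Longrightarrow> takeWhile P (A @ B) = A"
  by (cases B) auto

lemma vtyp_Suc_excl: "x \<in> {1..n} \<Longrightarrow> vtyp R n k x \<Longrightarrow> \<not> vtyp R n (Suc k) x"
  by (auto simp: vtyp_def fcols_def)

context stab begin

lemma rest_prop:
  assumes "1 \<le> k"
  shows "concat (map (Lw R n c) [Suc k..<N]) = [] \<or>
         \<not> vtyp R n k (hd (concat (map (Lw R n c) [Suc k..<N])))"
proof (cases "Suc k < N")
  case False thus ?thesis by simp
next
  case True
  show ?thesis
  proof (cases "canon_top R n c (Suc k) = {}")
    case True
    have "\<forall>j\<in>set [Suc k..<N]. Lw R n c j = []"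
      using empty_later[OF True] Lw_Nil by auto
    hence "concat (map (Lw R n c) [Suc k..<N]) = []" by simp
    thus ?thesis by simp
  next
    case False
    have ne: "Lw R n c (Suc k) \<noteq> []" using Lw_Nil False by simp
    have e: "concat (map (Lw R n c) [Suc k..<N]) = Lw R n c (Suc k) @ concat (map (Lw R n c) [Suc (Suc k)..<N])"
      using \<open>Suc k < N\<close> by (simp add: upt_conv_Cons)
    have h: "hd (concat (map (Lw R n c) [Suc k..<N])) \<in> canon_top R n c (Suc k)"
      unfolding e using ne set_Lw[of "Suc k" R n c] hd_in_set[OF ne] by (simp add: hd_append)
    hence "vtyp R n (Suc k) (hd (concat (map (Lw R n c) [Suc k..<N])))"
      using canon_top_typ[OF _ h] by simp
    moreover have "hd (concat (map (Lw R n c) [Suc k..<N])) \<in> {1..n}" using h canon_top_sub[of "Suc k" R n c] by auto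
    ultimately show ?thesis using vtyp_Suc_excl by blast
  qed
qed

lemma takeWhile_rest:
  assumes "1 \<le> k" "k < N"
  shows "takeWhile (vtyp R n k) (concat (map (Lw R n c) [k..<N])) = Lw R n c k"
proof -
  have e: "concat (map (Lw R n c) [k..<N]) = Lw R n c k @ concat (map (Lw R n c) [Suc k..<N])"
    using assms by (simp add: upt_conv_Cons)
  have "\<forall>x\<in>set (Lw R n c k). vtyp R n k x" using set_Lw canon_top_typ assms by blast
  thus ?thesis unfolding e by (rule takeWhile_blocks) (rule rest_prop[OF assms(1)])
qed

end

lemma phases_eq:
  assumes s1: "stab R n c" and s2: "stab R n c'"
    and w: "canon_word R n c = canon_word R n c'"
  shows "1 \<le> k \<Longrightarrow> k < 2*n+3 \<Longrightarrow> canon_top R n c k = canon_top R n c' k"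
proof (induction k rule: less_induct)
  case (less k)
  let ?N = "2*n+3"
  have pre: "map (Lw R n c) [1..<k] = map (Lw R n c') [1..<k]"
  proof (rule map_cong[OF refl])
    fix j assume "j \<in> set [1..<k]"
    hence "1 \<le> j" "j < k" by auto
    with less have "canon_top R n c j = canon_top R n c' j" by simp
    thus "Lw R n c j = Lw R n c' j" by (simp add: Lw_def)
  qed
  have sp: "[1..<?N] = [1..<k] @ [k..<?N]"
    using upt_add_eq_append[of 1 k "?N - k"] less.prems by simp
  from w have "concat (map (Lw R n c) [1..<k]) @ concat (map (Lw R n c) [k..<?N])
     = concat (map (Lw R n c) [1..<k]) @ concat (map (Lw R n c') [k..<?N])"
    unfolding canon_word_Lw sp map_append concat_append pre .
  hence "concat (map (Lw R n c) [k..<?N]) = concat (map (Lw R n c') [k..<?N])" by simp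
  hence "Lw R n c k = Lw R n c' k"
    using stab.takeWhile_rest[OF s1 less.prems] stab.takeWhile_rest[OF s2 less.prems] by simp
  thus ?case using set_Lw[of k R n c] set_Lw[of k R n c'] less.prems by simp
qed



lemma rc_0: "run_changes w 0 = 0"
  by (simp add: run_changes_def)

lemma rc_Suc: "run_changes w (Suc p) = run_changes w p + (if asc_top w (Suc p) \<noteq> asc_top w p then 1 else 0)"
proof -
  let ?C = "\<lambda>q. asc_top w q \<noteq> asc_top w (q - 1)"
  have e: "{q. 1 \<le> q \<and> q \<le> Suc p \<and> ?C q} = {q. 1 \<le> q \<and> q \<le> p \<and> ?C q} \<union> (if ?C (Suc p) then {Suc p} else {})"
    by (auto simp: le_Suc_eq)
  have f: "finite {q. 1 \<le> q \<and> q \<le> p \<and> ?C q}" by (rule finite_subset[of _ "{..p}"]) auto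
  show ?thesis unfolding run_changes_def e using f by auto
qed

lemma asc_even: "asc_top w p \<longleftrightarrow> even (run_changes w p)"
proof (induction p)
  case 0 thus ?case by (simp add: rc_0 asc_top_def)
next
  case (Suc p) thus ?case by (auto simp: rc_Suc)
qed

lemma rc_mono: "p \<le> q \<Longrightarrow> run_changes w p \<le> run_changes w q"
  unfolding run_changes_def by (rule card_mono) (auto intro: finite_subset[of _ "{..q}"])

lemma rc_le: "run_changes w p \<le> p"
  by (induction p) (auto simp: rc_0 rc_Suc)

lemma rc_Suc_le: "run_changes w (Suc p) \<le> run_changes w p + 1"
  by (simp add: rc_Suc)

lemma chain_inc: "(\<forall>r. a < r \<and> r \<le> b \<longrightarrow> (xs::nat list)!(r-1) < xs!r) \<Longrightarrow> a < b \<Longrightarrow> xs!a < xs!b"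
proof (induction b)
  case 0 thus ?case by simp
next
  case (Suc b)
  have s: "xs!b < xs!Suc b" using Suc.prems(1) Suc.prems(2) by (metis diff_Suc_1 le_refl)
  show ?case
  proof (cases "a = b")
    case True thus ?thesis using s by simp
  next
    case False
    hence "xs!a < xs!b" using Suc by auto
    thus ?thesis using s by simp
  qed
qed

lemma chain_dec: "(\<forall>r. a < r \<and> r \<le> b \<longrightarrow> (xs::nat list)!(r-1) > xs!r) \<Longrightarrow> a < b \<Longrightarrow> xs!a > xs!b"
proof (induction b)
  case 0 thus ?case by simp
next
  case (Suc b)
  have s: "xs!b > xs!Suc b" using Suc.prems(1) Suc.prems(2) by (metis diff_Suc_1 le_refl)
  show ?case
  proof (cases "a = b")
    case True thus ?thesis using s by simp
  next
    case False
    hence "xs!a > xs!b" using Suc by auto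
    thus ?thesis using s by simp
  qed
qed

lemma asc_step: "0 < r \<Longrightarrow> asc_top w r \<Longrightarrow> w!(r-1) < w!r"
  by (simp add: asc_top_def)

locale perm =
  fixes n :: nat and \<pi> :: "nat list"
  assumes dist: "distinct \<pi>" and setp: "set \<pi> = {1..n}"
begin

lemma len: "length \<pi> = n"
  using distinct_card[OF dist] setp by simp

abbreviation "rc \<equiv> run_changes \<pi>"
abbreviation "RR \<equiv> perm_rows \<pi>"

definition pos :: "nat \<Rightarrow> nat" where "pos v = (THE p. p < n \<and> \<pi>!p = v)"
definition tt :: "nat \<Rightarrow> nat" where "tt v = (if v \<in> {1..n} then rc (pos v) + 1 else 0)"

lemma nth_in: "p < n \<Longrightarrow> \<pi>!p \<in> {1..n}"
  using setp len nth_mem by blast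

lemma nth_inj: "p < n \<Longrightarrow> q < n \<Longrightarrow> \<pi>!p = \<pi>!q \<longleftrightarrow> p = q"
  using nth_eq_iff_index_eq[OF dist] len by simp

lemma pos_nth: "p < n \<Longrightarrow> pos (\<pi>!p) = p"
  unfolding pos_def by (rule the_equality) (auto simp: nth_inj)

lemma pos_lt: "v \<in> {1..n} \<Longrightarrow> pos v < n \<and> \<pi>!(pos v) = v"
proof -
  assume "v \<in> {1..n}"
  then obtain p where "p < n" "\<pi>!p = v" using setp len by (metis in_set_conv_nth)
  thus ?thesis using pos_nth by auto
qed

lemma tt_nth: "p < n \<Longrightarrow> tt (\<pi>!p) = rc p + 1"
  using nth_in pos_nth by (simp add: tt_def)

lemma tt0: "tt 0 = 0" by (simp add: tt_def)

lemma tt_range: "v \<in> {1..n} \<Longrightarrow> 1 \<le> tt v \<and> tt v \<le> n"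
  using pos_lt[of v] rc_le[of \<pi> "pos v"] by (auto simp: tt_def)

lemma desc_step: "0 < r \<Longrightarrow> r < n \<Longrightarrow> \<not> asc_top \<pi> r \<Longrightarrow> \<pi>!(r-1) > \<pi>!r"
proof -
  assume a: "0 < r" "r < n" "\<not> asc_top \<pi> r"
  have "\<pi>!(r-1) \<noteq> \<pi>!r" using nth_inj[of "r-1" r] a by auto
  with a show ?thesis by (auto simp: asc_top_def)
qed

lemma R_iff: "v \<in> {1..n} \<Longrightarrow> v \<in> RR \<longleftrightarrow> even (tt v)"
proof -
  assume v: "v \<in> {1..n}"
  have "v \<in> RR \<longleftrightarrow> (\<exists>p<n. \<pi>!p = v \<and> \<not> asc_top \<pi> p)"
    using v len by (auto simp: perm_rows_def)
  also have "\<dots> \<longleftrightarrow> \<not> asc_top \<pi> (pos v)"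
    using pos_lt[OF v] pos_nth by metis
  also have "\<dots> \<longleftrightarrow> even (tt v)" using v by (simp add: tt_def asc_even)
  finally show ?thesis .
qed

lemma C_iff: "v \<in> {1..n} \<Longrightarrow> v \<in> fcols RR n \<longleftrightarrow> odd (tt v)"
  using R_iff by (auto simp: fcols_def)

lemma R0: "0 \<in> RR" by (simp add: perm_rows_def)

lemma R_sub: "RR \<subseteq> {0..n}"
  using nth_in len by (auto simp: perm_rows_def)

lemma same_block_asc:
  assumes "p \<le> r" "r \<le> q" "rc q = rc p"
  shows "asc_top \<pi> r \<longleftrightarrow> even (rc p)"
proof -
  have "rc r = rc p" using rc_mono[OF assms(1), of \<pi>] rc_mono[OF assms(2), of \<pi>] assms(3) by simp
  thus ?thesis by (simp add: asc_even)
qed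

lemma block_order:
  assumes "p < q" "q < n" "rc p = rc q"
  shows "(even (rc p) \<longrightarrow> \<pi>!p < \<pi>!q) \<and> (odd (rc p) \<longrightarrow> \<pi>!p > \<pi>!q)"
proof -
  have a: "\<And>r. p < r \<Longrightarrow> r \<le> q \<Longrightarrow> asc_top \<pi> r \<longleftrightarrow> even (rc p)"
  proof -
    fix r assume "p < r" "r \<le> q"
    thus "asc_top \<pi> r \<longleftrightarrow> even (rc p)" using same_block_asc[of p r q] assms(3) by simp
  qed
  show ?thesis
  proof (intro conjI impI)
    assume "even (rc p)"
    hence "\<forall>r. p < r \<and> r \<le> q \<longrightarrow> \<pi>!(r-1) < \<pi>!r" using a asc_step by auto
    thus "\<pi>!p < \<pi>!q" using chain_inc assms(1) by blast
  next
    assume "odd (rc p)"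
    hence "\<forall>r. p < r \<and> r \<le> q \<longrightarrow> \<pi>!(r-1) > \<pi>!r" using a desc_step assms(2) by auto
    thus "\<pi>!p > \<pi>!q" using chain_dec assms(1) by blast
  qed
qed

lemma witness:
  assumes v: "v \<in> {1..n}" and t2: "tt v \<ge> 2"
  shows "\<exists>u\<in>{1..n}. tt u + 1 = tt v \<and> (even (tt v) \<longrightarrow> v < u) \<and> (odd (tt v) \<longrightarrow> u < v)"
proof -
  define p where "p = pos v"
  have p: "p < n" "\<pi>!p = v" using pos_lt[OF v] p_def by auto
  have tv: "tt v = rc p + 1" using v p_def by (simp add: tt_def)
  define q where "q = (LEAST q. rc q = rc p)"
  have rq: "rc q = rc p" unfolding q_def by (rule LeastI[of _ p]) simp
  have qp: "q \<le> p" unfolding q_def by (rule Least_le) simp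
  have q0: "q \<noteq> 0"
  proof
    assume "q = 0"
    hence "rc p = 0" using rq rc_0[of \<pi>] by simp
    with tv t2 show False by simp
  qed
  have "rc (q - 1) \<noteq> rc p" using q0 not_less_Least[of "q - 1" "\<lambda>q. rc q = rc p"] q_def by auto
  moreover have "rc (q - 1) \<le> rc q" by (rule rc_mono) simp
  moreover have "rc q \<le> rc (q - 1) + 1" using rc_Suc_le[of \<pi> "q - 1"] q0 by simp
  ultimately have rq1: "rc (q - 1) + 1 = rc p" using rq by simp
  define u where "u = \<pi>!(q - 1)"
  have qn: "q - 1 < n" using qp p by simp
  have u1: "u \<in> {1..n}" using nth_in[OF qn] u_def by simp
  have tu: "tt u + 1 = tt v" using tt_nth[OF qn] u_def rq1 tv by simp
  have a: "\<And>r. q - 1 < r \<Longrightarrow> r \<le> p \<Longrightarrow> asc_top \<pi> r \<longleftrightarrow> even (rc p)"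
    using same_block_asc[of q _ p] rq q0 by simp
  have qlp: "q - 1 < p" using qp q0 by simp
  have "(even (tt v) \<longrightarrow> v < u) \<and> (odd (tt v) \<longrightarrow> u < v)"
  proof (intro conjI impI)
    assume "even (tt v)"
    hence "\<forall>r. q - 1 < r \<and> r \<le> p \<longrightarrow> \<pi>!(r-1) > \<pi>!r" using a desc_step p(1) tv by auto
    thus "v < u" using chain_dec[OF _ qlp] p u_def by blast
  next
    assume "odd (tt v)"
    hence "\<forall>r. q - 1 < r \<and> r \<le> p \<longrightarrow> \<pi>!(r-1) < \<pi>!r" using a asc_step tv by auto
    thus "u < v" using chain_inc[OF _ qlp] p u_def by blast
  qed
  thus ?thesis using u1 tu by blast
qed

end


lemma deg_row: "v \<in> R \<Longrightarrow> deg R n v = card {j. cell R n v j}"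
  unfolding deg_def by (rule arg_cong[where f=card]) (auto simp: adj_def cell_def fcols_def)

lemma deg_col: "v \<in> fcols R n \<Longrightarrow> deg R n v = card {i. cell R n i v}"
  unfolding deg_def by (rule arg_cong[where f=card]) (auto simp: adj_def cell_def fcols_def)

lemma fin_row: "finite {j. cell R n v j}"
  by (rule finite_subset[of _ "{0..n}"]) (auto simp: cell_def fcols_def)

lemma fin_col: "finite {i. cell R n i v}"
  by (rule finite_subset[of _ "{0..n}"]) (auto simp: cell_def fcols_def)

lemma EW_stab:
  assumes R0: "0 \<in> R" and T: "T \<in> EWtab R n"
  shows "stab R n (phi_TC R n T)"
proof
  fix v assume v: "v \<in> {1..n}"
  from T have T1: "\<And>i j. T i j \<Longrightarrow> cell R n i j" and T2: "\<And>j. cell R n 0 j \<Longrightarrow> T 0 j"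
    and T3: "\<And>i. i \<in> R - {0} \<Longrightarrow> \<exists>j. cell R n i j \<and> \<not> T i j"
    by (auto simp: EWtab_def)
  show "phi_TC R n T v < deg R n v"
  proof (cases "v \<in> R")
    case True
    have "v \<in> R - {0}" using True v by auto
    then obtain j where j: "cell R n v j" "\<not> T v j" using T3 by blast
    have "card {j. cell R n v j \<and> T v j} < card {j. cell R n v j}"
      by (rule psubset_card_mono[OF fin_row]) (use j in auto)
    thus ?thesis using True v by (simp add: phi_TC_def deg_row)
  next
    case False
    hence vc: "v \<in> fcols R n" using v by (simp add: fcols_def)
    have c0: "cell R n 0 v" using vc R0 v by (simp add: cell_def)
    have "card {i. cell R n i v \<and> \<not> T i v} < card {i. cell R n i v}"
      by (rule psubset_card_mono[OF fin_col]) (use c0 T2[OF c0] in auto)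
    thus ?thesis using False v vc by (simp add: phi_TC_def deg_col)
  qed
qed

lemma count_lemma:
  fixes g :: "nat \<Rightarrow> nat"
  assumes "finite S" "\<forall>j\<in>S. g j \<noteq> a" "m < a"
  shows "card S \<le> card {j\<in>S. a < g j} + card {j\<in>S. g j \<le> m} \<longleftrightarrow> (\<forall>j\<in>S. \<not> (m < g j \<and> g j < a))"
proof -
  let ?A = "{j\<in>S. a < g j}" and ?B = "{j\<in>S. g j \<le> m}"
  have fA: "finite ?A" and fB: "finite ?B" using assms(1) by auto
  have "card (?A \<union> ?B) = card ?A + card ?B"
    by (rule card_Un_disjoint[OF fA fB]) (use assms(3) in auto)
  moreover have sub: "?A \<union> ?B \<subseteq> S" by auto
  moreover have "card S \<le> card (?A \<union> ?B) \<longleftrightarrow> ?A \<union> ?B = S"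
    using card_seteq[OF assms(1) sub] card_mono[OF assms(1) sub] by auto
  moreover have "?A \<union> ?B = S \<longleftrightarrow> (\<forall>j\<in>S. a < g j \<or> g j \<le> m)" by blast
  ultimately have e: "card S \<le> card ?A + card ?B \<longleftrightarrow> (\<forall>j\<in>S. a < g j \<or> g j \<le> m)" by simp
  have "\<And>j. j \<in> S \<Longrightarrow> (a < g j \<or> g j \<le> m) \<longleftrightarrow> \<not> (m < g j \<and> g j < a)"
  proof -
    fix j assume "j \<in> S"
    hence "g j \<noteq> a" using assms(2) by blast
    thus "(a < g j \<or> g j \<le> m) \<longleftrightarrow> \<not> (m < g j \<and> g j < a)" by arith
  qed
  with e show ?thesis by blast
qed

context perm begin

definition T0 :: "nat \<Rightarrow> nat \<Rightarrow> bool" where "T0 i j \<longleftrightarrow> cell RR n i j \<and> tt i < tt j"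
abbreviation "c0 \<equiv> phi_TC RR n T0"

lemma cell_col: "cell RR n i j \<Longrightarrow> j \<in> {1..n} \<and> odd (tt j)"
  using C_iff by (auto simp: cell_def fcols_def)

lemma cell_row: "cell RR n i j \<Longrightarrow> i \<noteq> 0 \<Longrightarrow> i \<in> {1..n} \<and> even (tt i)"
  using R_iff R_sub by (auto simp: cell_def)

lemma cell_tt_ne: "cell RR n i j \<Longrightarrow> tt i \<noteq> tt j"
  using cell_col[of i j] cell_row[of i j] tt_range[of j] tt0 by (cases "i = 0") auto

lemma T0_EW: "T0 \<in> EWtab RR n"
proof -
  have a1: "\<forall>i j. T0 i j \<longrightarrow> cell RR n i j" by (simp add: T0_def)
  have a2: "\<forall>j. cell RR n 0 j \<longrightarrow> T0 0 j"
  proof (intro allI impI)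
    fix j assume "cell RR n 0 j" thus "T0 0 j" using cell_col[of 0 j] tt_range[of j] tt0 by (simp add: T0_def)
  qed
  have a3: "\<forall>i\<in>RR - {0}. \<exists>j. cell RR n i j \<and> \<not> T0 i j"
  proof
    fix i assume i: "i \<in> RR - {0}"
    hence i1: "i \<in> {1..n}" using R_sub by auto
    hence ev: "even (tt i)" using R_iff i by auto
    have "tt i \<ge> 2" using tt_range[OF i1] ev by presburger
    then obtain u where u: "u \<in> {1..n}" "tt u + 1 = tt i" "i < u" using witness[OF i1] ev by auto
    have "u \<in> fcols RR n" using C_iff[OF u(1)] u(2) ev by presburger
    hence "cell RR n i u" using i u by (simp add: cell_def)
    moreover have "\<not> T0 i u" using u by (simp add: T0_def)
    ultimately show "\<exists>j. cell RR n i j \<and> \<not> T0 i j" by blast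
  qed
  have a4: "\<forall>i1 i2 j1 j2. i1 < i2 \<and> j1 < j2 \<and> cell RR n i1 j1 \<and> cell RR n i1 j2
         \<and> cell RR n i2 j1 \<and> cell RR n i2 j2 \<longrightarrow>
        \<not> (\<not> T0 i1 j1 \<and> \<not> T0 i2 j2 \<and> T0 i1 j2 \<and> T0 i2 j1)
      \<and> \<not> (\<not> T0 i1 j2 \<and> \<not> T0 i2 j1 \<and> T0 i1 j1 \<and> T0 i2 j2)"
    by (auto simp: T0_def)
  show ?thesis unfolding EWtab_def mem_Collect_eq using a1 a2 a3 a4 by blast
qed

lemma stab0: "stab RR n c0" using EW_stab[OF R0 T0_EW] .

lemma K:
  assumes X: "Xs RR n c0 m = {u \<in> {0..n}. tt u \<le> m}"
  shows "canon_top RR n c0 (Suc m) = {v \<in> {1..n}. tt v = Suc m}"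
proof -
  have "\<And>v. v \<in> {1..n} \<Longrightarrow> (vtyp RR n (Suc m) v \<and> v \<notin> Xs RR n c0 m \<and>
     deg RR n v \<le> c0 v + card {u \<in> Xs RR n c0 m. adj RR n u v}) \<longleftrightarrow> tt v = Suc m"
  proof -
    fix v assume v: "v \<in> {1..n}"
    have nX: "v \<notin> Xs RR n c0 m \<longleftrightarrow> m < tt v" unfolding X using v by (simp add: not_le)
    show "?thesis v"
    proof (cases "v \<in> RR")
      case True
      have ev: "even (tt v)" using R_iff v True by simp
      have ty: "vtyp RR n (Suc m) v \<longleftrightarrow> even (Suc m)" using True by (simp add: vtyp_def fcols_def)
      let ?S = "{j. cell RR n v j}"
      have dg: "deg RR n v = card ?S" using deg_row[OF True] .
      have cv: "c0 v = card {j\<in>?S. tt v < tt j}" using v True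
        by (simp add: phi_TC_def T0_def)
      have ca: "{u \<in> Xs RR n c0 m. adj RR n u v} = {j\<in>?S. tt j \<le> m}"
        using X True by (auto simp: adj_def cell_def fcols_def)
      have ne: "\<forall>j\<in>?S. tt j \<noteq> tt v" using cell_tt_ne by (metis mem_Collect_eq)
      show ?thesis
      proof (cases "m < tt v")
        case False thus ?thesis using nX by auto
      next
        case mt: True
        note cl = count_lemma[OF fin_row ne mt]
        show ?thesis
        proof
          assume h: "vtyp RR n (Suc m) v \<and> v \<notin> Xs RR n c0 m \<and>
              deg RR n v \<le> c0 v + card {u \<in> Xs RR n c0 m. adj RR n u v}"
          show "tt v = Suc m"
          proof (rule ccontr)
            assume "tt v \<noteq> Suc m"
            hence t2: "tt v \<ge> 2" "m < tt v - 1" using mt ty h ev by presburger+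
            then obtain u where u: "u \<in> {1..n}" "tt u + 1 = tt v" "v < u" using witness[OF v] ev by auto
            have "u \<in> fcols RR n" using C_iff[OF u(1)] u(2) ev by presburger
            hence "u \<in> ?S" using True u by (simp add: cell_def)
            moreover have "\<forall>j\<in>?S. \<not> (m < tt j \<and> tt j < tt v)" using h cl dg cv ca by simp
            ultimately show False using u t2 by force
          qed
        next
          assume "tt v = Suc m"
          moreover hence "\<forall>j\<in>?S. \<not> (m < tt j \<and> tt j < tt v)" by auto
          ultimately show "vtyp RR n (Suc m) v \<and> v \<notin> Xs RR n c0 m \<and>
              deg RR n v \<le> c0 v + card {u \<in> Xs RR n c0 m. adj RR n u v}"
            using cl dg cv ca ty ev nX by simp
        qed
      qed
    next
      case False
      have vc: "v \<in> fcols RR n" using v False by (simp add: fcols_def)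
      have od: "odd (tt v)" using C_iff v vc by simp
      have ty: "vtyp RR n (Suc m) v \<longleftrightarrow> odd (Suc m)" using False vc by (simp add: vtyp_def)
      let ?S = "{i. cell RR n i v}"
      have dg: "deg RR n v = card ?S" using deg_col[OF vc] .
      have ne: "\<forall>j\<in>?S. tt j \<noteq> tt v" using cell_tt_ne by (metis mem_Collect_eq)
      have cv: "c0 v = card {j\<in>?S. tt v < tt j}"
      proof -
        have "c0 v = card {i. cell RR n i v \<and> \<not> T0 i v}" using v False by (simp add: phi_TC_def)
        also have "{i. cell RR n i v \<and> \<not> T0 i v} = {j\<in>?S. tt v < tt j}"
          using ne by (auto simp: T0_def)
        finally show ?thesis .
      qed
      have ca: "{u \<in> Xs RR n c0 m. adj RR n u v} = {j\<in>?S. tt j \<le> m}"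
        unfolding X using False vc v by (auto simp: adj_def cell_def)
      show ?thesis
      proof (cases "m < tt v")
        case False thus ?thesis using nX by auto
      next
        case mt: True
        note cl = count_lemma[OF fin_col ne mt]
        show ?thesis
        proof
          assume h: "vtyp RR n (Suc m) v \<and> v \<notin> Xs RR n c0 m \<and>
              deg RR n v \<le> c0 v + card {u \<in> Xs RR n c0 m. adj RR n u v}"
          show "tt v = Suc m"
          proof (rule ccontr)
            assume "tt v \<noteq> Suc m"
            hence t2: "tt v \<ge> 2" "m < tt v - 1" using mt ty h od by presburger+
            then obtain u where u: "u \<in> {1..n}" "tt u + 1 = tt v" "u < v" using witness[OF v] od by auto
            have "u \<in> RR" using R_iff[OF u(1)] u(2) od by presburger
            hence "u \<in> ?S" using vc u by (simp add: cell_def)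
            moreover have "\<forall>j\<in>?S. \<not> (m < tt j \<and> tt j < tt v)" using h cl dg cv ca by simp
            ultimately show False using u t2 by force
          qed
        next
          assume "tt v = Suc m"
          moreover hence "\<forall>j\<in>?S. \<not> (m < tt j \<and> tt j < tt v)" by auto
          ultimately show "vtyp RR n (Suc m) v \<and> v \<notin> Xs RR n c0 m \<and>
              deg RR n v \<le> c0 v + card {u \<in> Xs RR n c0 m. adj RR n u v}"
            using cl dg cv ca ty od nX by simp
        qed
      qed
    qed
  qed
  thus ?thesis using stab.char[OF stab0, of m] by blast
qed

lemma Xs_T0: "Xs RR n c0 m = {u \<in> {0..n}. tt u \<le> m}"
proof (induction m)
  case 0
  have h: "\<And>u. u \<in> {0..n} \<and> tt u \<le> 0 \<longleftrightarrow> u = 0"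
  proof -
    fix u show "u \<in> {0..n} \<and> tt u \<le> 0 \<longleftrightarrow> u = 0"
    proof (cases "u = 0")
      case True thus ?thesis using tt0 by simp
    next
      case False thus ?thesis using tt_range[of u] by auto
    qed
  qed
  show ?case using h by (auto simp: Xs_0)
next
  case (Suc m)
  have h: "\<And>x. x \<in> {0..n} \<Longrightarrow> tt x = Suc m \<Longrightarrow> x \<in> {1..n}"
    by (case_tac "x = 0") (auto simp: tt0)
  show ?case unfolding Xs_Suc Suc K[OF Suc] using h by (auto simp: le_Suc_eq tt0)
qed

lemma ph_T0: "1 \<le> k \<Longrightarrow> canon_top RR n c0 k = {v \<in> {1..n}. tt v = k}"
  using K[OF Xs_T0, of "k - 1"] by simp

end


lemma filter_split:
  "sorted (map (g::'a \<Rightarrow> nat) xs) \<Longrightarrow>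
   filter (\<lambda>x. g x < b) xs @ filter (\<lambda>x. g x = b) xs = filter (\<lambda>x. g x < Suc b) xs"
proof (induction xs)
  case Nil thus ?case by simp
next
  case (Cons x xs)
  have all: "\<forall>y\<in>set xs. g x \<le> g y" and s: "sorted (map g xs)" using Cons.prems by auto
  show ?case
  proof (cases "g x < b")
    case True thus ?thesis using Cons.IH[OF s] by simp
  next
    case False
    hence a: "\<forall>y\<in>set xs. b \<le> g y" using all by force
    have e1: "filter (\<lambda>x. g x < b) xs = []" using a by (auto simp: filter_empty_conv)
    have e2: "filter (\<lambda>x. g x < Suc b) xs = filter (\<lambda>x. g x = b) xs"
      by (rule filter_cong) (use a in auto)
    show ?thesis using False e1 e2 by auto
  qed
qed

lemma concat_filter:
  "sorted (map (g::'a \<Rightarrow> nat) xs) \<Longrightarrow> (\<forall>x\<in>set xs. a \<le> g x) \<Longrightarrow> a \<le> b \<Longrightarrow>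
   concat (map (\<lambda>k. filter (\<lambda>x. g x = k) xs) [a..<b]) = filter (\<lambda>x. g x < b) xs"
proof (induction b)
  case 0 thus ?case by (auto simp: filter_empty_conv)
next
  case (Suc b)
  show ?case
  proof (cases "a \<le> b")
    case True
    thus ?thesis using Suc.IH[OF Suc.prems(1,2) True] filter_split[OF Suc.prems(1)] by simp
  next
    case False
    hence ab: "a = Suc b" using Suc.prems(3) by simp
    have "filter (\<lambda>x. g x < Suc b) xs = []" using Suc.prems(2) ab by (force simp: filter_empty_conv)
    thus ?thesis using ab by simp
  qed
qed

lemma sorted_filter_nth:
  "(\<forall>p q. p < q \<and> q < length xs \<and> P (xs!p) \<and> P (xs!q) \<longrightarrow> Q (xs!p) (xs!q)) \<Longrightarrow> sorted_wrt Q (filter P xs)"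
proof (induction xs)
  case Nil thus ?case by simp
next
  case (Cons x xs)
  have h1: "\<forall>p q. p < q \<and> q < length xs \<and> P (xs!p) \<and> P (xs!q) \<longrightarrow> Q (xs!p) (xs!q)"
  proof (intro allI impI)
    fix p q assume "p < q \<and> q < length xs \<and> P (xs!p) \<and> P (xs!q)"
    thus "Q (xs!p) (xs!q)" using Cons.prems[rule_format, of "Suc p" "Suc q"] by simp
  qed
  have h2: "P x \<Longrightarrow> \<forall>y\<in>set (filter P xs). Q x y"
  proof
    fix y assume px: "P x" and "y \<in> set (filter P xs)"
    then obtain q where q: "q < length xs" "xs!q = y" "P y" by (auto simp: in_set_conv_nth)
    thus "Q x y" using Cons.prems[rule_format, of 0 "Suc q"] px by simp
  qed
  show ?case using Cons.IH[OF h1] h2 by simp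
qed

context perm begin

lemma sorted_tt: "sorted (map tt \<pi>)"
  unfolding sorted_iff_nth_mono using len by (simp add: tt_nth rc_mono)

lemma filt_set: "set (filter (\<lambda>x. tt x = k) \<pi>) = {v\<in>{1..n}. tt v = k}"
  using setp by auto

lemma filt_sorted: "odd k \<Longrightarrow> sorted (filter (\<lambda>x. tt x = k) \<pi>)"
proof (rule sorted_filter_nth, intro allI impI)
  fix p q assume k: "odd k" and h: "p < q \<and> q < length \<pi> \<and> tt (\<pi>!p) = k \<and> tt (\<pi>!q) = k"
  hence q: "q < n" and p: "p < n" using len by auto
  have e: "rc p = rc q" "rc p + 1 = k" using h tt_nth[OF q] tt_nth[OF p] by auto
  hence "even (rc p)" using k by presburger
  thus "\<pi>!p \<le> \<pi>!q" using block_order[of p q] h q e by auto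
qed

lemma filt_sorted_rev: "even k \<Longrightarrow> sorted (rev (filter (\<lambda>x. tt x = k) \<pi>))"
  unfolding sorted_wrt_rev
proof (rule sorted_filter_nth, intro allI impI)
  fix p q assume k: "even k" and h: "p < q \<and> q < length \<pi> \<and> tt (\<pi>!p) = k \<and> tt (\<pi>!q) = k"
  hence q: "q < n" and p: "p < n" using len by auto
  have e: "rc p = rc q" "rc p + 1 = k" using h tt_nth[OF q] tt_nth[OF p] by auto
  hence "odd (rc p)" using k by presburger
  thus "\<pi>!q \<le> \<pi>!p" using block_order[of p q] h q e by auto
qed

lemma sl_id: "distinct xs \<Longrightarrow> sorted xs \<Longrightarrow> sorted_list_of_set (set xs) = xs"
  by (simp add: sorted_list_of_set_sort_remdups distinct_remdups_id sorted_sort_id)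

lemma Lw_T0: "1 \<le> k \<Longrightarrow> Lw RR n c0 k = filter (\<lambda>x. tt x = k) \<pi>"
proof -
  assume k: "1 \<le> k"
  let ?F = "filter (\<lambda>x. tt x = k) \<pi>"
  have ct: "canon_top RR n c0 k = set ?F" using ph_T0[OF k] filt_set by simp
  have dF: "distinct ?F" using dist by simp
  show ?thesis
  proof (cases "odd k")
    case True thus ?thesis using ct sl_id[OF dF filt_sorted[OF True]] by (simp add: Lw_def)
  next
    case False
    have "sorted_list_of_set (set (rev ?F)) = rev ?F"
      by (rule sl_id) (use dF filt_sorted_rev False in auto)
    thus ?thesis using ct False by (simp add: Lw_def)
  qed
qed

lemma Psi_T0: "Psi RR n T0 = \<pi>"
proof -
  have m1: "map (Lw RR n c0) [1..<2*n+3] = map (\<lambda>k. filter (\<lambda>x. tt x = k) \<pi>) [1..<2*n+3]"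
    by (rule map_cong[OF refl]) (simp add: Lw_T0)
  have m2: "concat (map (\<lambda>k. filter (\<lambda>x. tt x = k) \<pi>) [1..<2*n+3]) = filter (\<lambda>x. tt x < 2*n+3) \<pi>"
    by (rule concat_filter[OF sorted_tt]) (use tt_range setp in auto)
  have m3: "filter (\<lambda>x. tt x < 2*n+3) \<pi> = \<pi>"
  proof (subst filter_id_conv, rule ballI)
    fix x assume "x \<in> set \<pi>"
    hence "x \<in> {1..n}" using setp by simp
    thus "tt x < 2*n+3" using tt_range[of x] by linarith
  qed
  show ?thesis unfolding Psi_def canon_word_Lw m1 m2 m3 ..
qed

end


context perm begin

lemma part_row: "v \<in> {1..n} \<Longrightarrow> v \<in> RR \<Longrightarrow>
  card {j. cell RR n v j} = card {j. cell RR n v j \<and> tt v < tt j} + card {j. cell RR n v j \<and> tt j < tt v}"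
proof -
  assume v: "v \<in> {1..n}" "v \<in> RR"
  have e: "{j. cell RR n v j} = {j. cell RR n v j \<and> tt v < tt j} \<union> {j. cell RR n v j \<and> tt j < tt v}"
    using cell_tt_ne[of v] by (auto simp: linorder_neq_iff)
  moreover have c: "card ({j. cell RR n v j \<and> tt v < tt j} \<union> {j. cell RR n v j \<and> tt j < tt v})
     = card {j. cell RR n v j \<and> tt v < tt j} + card {j. cell RR n v j \<and> tt j < tt v}"
  proof (rule card_Un_disjoint)
      show "finite {j. cell RR n v j \<and> tt v < tt j}" by (rule rev_finite_subset[OF fin_row[of RR n v]]) blast
      show "finite {j. cell RR n v j \<and> tt j < tt v}" by (rule rev_finite_subset[OF fin_row[of RR n v]]) blast
      show "{j. cell RR n v j \<and> tt v < tt j} \<inter> {j. cell RR n v j \<and> tt j < tt v} = {}" by auto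
    qed
  ultimately show ?thesis by (metis (no_types))
qed

lemma part_col: "v \<in> {1..n} \<Longrightarrow>
  card {i. cell RR n i v} = card {i. cell RR n i v \<and> tt v < tt i} + card {i. cell RR n i v \<and> tt i < tt v}"
proof -
  assume v: "v \<in> {1..n}"
  have e: "{i. cell RR n i v} = {i. cell RR n i v \<and> tt v < tt i} \<union> {i. cell RR n i v \<and> tt i < tt v}"
    using cell_tt_ne[of _ v] by (auto simp: linorder_neq_iff)
  moreover have c: "card ({i. cell RR n i v \<and> tt v < tt i} \<union> {i. cell RR n i v \<and> tt i < tt v})
     = card {i. cell RR n i v \<and> tt v < tt i} + card {i. cell RR n i v \<and> tt i < tt v}"
  proof (rule card_Un_disjoint)
      show "finite {i. cell RR n i v \<and> tt v < tt i}" by (rule rev_finite_subset[OF fin_col[of RR n v]]) blast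
      show "finite {i. cell RR n i v \<and> tt i < tt v}" by (rule rev_finite_subset[OF fin_col[of RR n v]]) blast
      show "{i. cell RR n i v \<and> tt v < tt i} \<inter> {i. cell RR n i v \<and> tt i < tt v} = {}" by auto
    qed
  ultimately show ?thesis by (metis (no_types))
qed

lemma uniq:
  assumes T: "T \<in> EWtab RR n" and P: "Psi RR n T = \<pi>"
  shows "T = T0"
proof -
  let ?c = "phi_TC RR n T"
  have st: "stab RR n ?c" using EW_stab[OF R0 T] .
  have w: "canon_word RR n ?c = canon_word RR n c0" using P Psi_T0 by (simp add: Psi_def)
  have ph: "\<And>k. 1 \<le> k \<Longrightarrow> k < 2*n+3 \<Longrightarrow> canon_top RR n ?c k = canon_top RR n c0 k"
    using phases_eq[OF st stab0 w] by blast
  have Xc: "\<And>m. m < 2*n+3 \<Longrightarrow> Xs RR n ?c m = {u \<in> {0..n}. tt u \<le> m}"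
  proof -
    fix m :: nat assume m: "m < 2*n+3"
    have "Xs RR n ?c m = Xs RR n c0 m" unfolding Xs_def
      by (rule arg_cong[where f="insert 0"], rule SUP_cong[OF refl]) (use ph m in auto)
    thus "Xs RR n ?c m = {u \<in> {0..n}. tt u \<le> m}" using Xs_T0 by simp
  qed
  have top: "\<And>v. v \<in> {1..n} \<Longrightarrow> deg RR n v \<le> ?c v + card {u \<in> {u \<in> {0..n}. tt u < tt v}. adj RR n u v}"
  proof -
    fix v assume v: "v \<in> {1..n}"
    have tr: "1 \<le> tt v" "tt v \<le> n" using tt_range[OF v] by auto
    have "v \<in> canon_top RR n ?c (Suc (tt v - 1))" using ph[of "tt v"] tr ph_T0[of "tt v"] v by simp
    hence "deg RR n v \<le> ?c v + card {u \<in> Xs RR n ?c (tt v - 1). adj RR n u v}"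
      using stab.char[OF st, of "tt v - 1"] by blast
    moreover have "Xs RR n ?c (tt v - 1) = {u \<in> {0..n}. tt u < tt v}" using Xc[of "tt v - 1"] tr by auto
    ultimately show "deg RR n v \<le> ?c v + card {u \<in> {u \<in> {0..n}. tt u < tt v}. adj RR n u v}" by simp
  qed
  have row: "\<And>v. v \<in> {1..n} \<Longrightarrow> v \<in> RR \<Longrightarrow>
     card {j. cell RR n v j} \<le> card {j. cell RR n v j \<and> T v j} + card {j. cell RR n v j \<and> tt j < tt v}"
  proof -
    fix v assume v: "v \<in> {1..n}" "v \<in> RR"
    have "{u \<in> {u \<in> {0..n}. tt u < tt v}. adj RR n u v} = {j. cell RR n v j \<and> tt j < tt v}"
      using v by (auto simp: adj_def cell_def fcols_def)
    thus "?thesis v" using top[OF v(1)] v by (simp add: deg_row phi_TC_def)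
  qed
  have col: "\<And>v. v \<in> {1..n} \<Longrightarrow> v \<notin> RR \<Longrightarrow>
     card {i. cell RR n i v} \<le> card {i. cell RR n i v \<and> \<not> T i v} + card {i. cell RR n i v \<and> tt i < tt v}"
  proof -
    fix v assume v: "v \<in> {1..n}" "v \<notin> RR"
    hence vc: "v \<in> fcols RR n" by (simp add: fcols_def)
    have "{u \<in> {u \<in> {0..n}. tt u < tt v}. adj RR n u v} = {i. cell RR n i v \<and> tt i < tt v}"
      using v vc by (auto simp: adj_def cell_def fcols_def)
    thus "?thesis v" using top[OF v(1)] v vc by (simp add: deg_col phi_TC_def)
  qed
  from T have T1: "\<And>i j. T i j \<Longrightarrow> cell RR n i j" and T2: "\<And>j. cell RR n 0 j \<Longrightarrow> T 0 j"
    by (auto simp: EWtab_def)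
  define W where "W i j \<longleftrightarrow> cell RR n i j \<and> T i j \<noteq> T0 i j" for i j
  show ?thesis
  proof (rule ccontr)
    assume ne: "T \<noteq> T0"
    have "\<exists>i j. T i j \<noteq> T0 i j"
    proof (rule ccontr)
      assume "\<not> (\<exists>i j. T i j \<noteq> T0 i j)"
      hence "T = T0" by (intro ext) auto
      with ne show False by simp
    qed
    then obtain i0 j0 where "T i0 j0 \<noteq> T0 i0 j0" by blast
    hence "W i0 j0" using T1 by (auto simp: W_def T0_def)
    define Pm where "Pm s \<longleftrightarrow> (\<exists>i j. W i j \<and> (tt i = s \<or> tt j = s))" for s
    define s where "s = (LEAST s. Pm s)"
    have "Pm (tt i0)" using \<open>W i0 j0\<close> by (auto simp: Pm_def)
    hence "Pm s" unfolding s_def by (rule LeastI)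
    then obtain i j where Wij: "W i j" and ij: "tt i = s \<or> tt j = s" by (auto simp: Pm_def)
    have mn: "\<And>i j. W i j \<Longrightarrow> s \<le> tt i \<and> s \<le> tt j"
    proof -
      fix i j assume w: "W i j"
      have "Pm (tt i)" "Pm (tt j)" unfolding Pm_def using w by blast+
      thus "s \<le> tt i \<and> s \<le> tt j" unfolding s_def by (simp add: Least_le)
    qed
    have cij: "cell RR n i j" and nij: "tt i \<noteq> tt j" using Wij cell_tt_ne by (auto simp: W_def)
    show False
    proof (cases "tt i = s")
      case True
      have i0: "i \<noteq> 0"
      proof
        assume "i = 0"
        hence "T i j" "T0 i j" using T2 cij cell_col[OF cij] tt_range[of j] tt0 by (auto simp: T0_def)
        thus False using Wij by (simp add: W_def)
      qed
      have i1: "i \<in> {1..n}" and iR: "i \<in> RR" using cell_row[OF cij i0] cij by (auto simp: cell_def)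
      let ?L = "{j. cell RR n i j \<and> T i j}" and ?M = "{j. cell RR n i j \<and> tt i < tt j}"
      have "?L \<subset> ?M"
      proof
        show "?L \<subseteq> ?M"
        proof
          fix j' assume "j' \<in> ?L"
          hence c: "cell RR n i j'" "T i j'" by auto
          show "j' \<in> ?M"
          proof (rule ccontr)
            assume "j' \<notin> ?M"
            hence "W i j'" using c by (auto simp: W_def T0_def)
            hence "s \<le> tt j'" using mn by blast
            with True cell_tt_ne[OF c(1)] \<open>j' \<notin> ?M\<close> c show False by auto
          qed
        qed
        have "tt i < tt j" using mn[OF Wij] True nij by simp
        hence "j \<in> ?M" "\<not> T i j" using cij Wij by (auto simp: W_def T0_def)
        thus "?L \<noteq> ?M" by blast
      qed
      hence "card ?L < card ?M" by (rule psubset_card_mono[OF finite_subset[OF _ fin_row[of RR n i]], rotated]) auto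
      thus False using row[OF i1 iR] part_row[OF i1 iR] by simp
    next
      case False
      hence tj: "tt j = s" using ij by simp
      have j1: "j \<in> {1..n}" using cell_col[OF cij] by simp
      have jR: "j \<notin> RR" using cij by (auto simp: cell_def fcols_def)
      let ?L = "{i. cell RR n i j \<and> \<not> T i j}" and ?M = "{i. cell RR n i j \<and> tt j < tt i}"
      have "?L \<subset> ?M"
      proof
        show "?L \<subseteq> ?M"
        proof
          fix i' assume "i' \<in> ?L"
          hence c: "cell RR n i' j" "\<not> T i' j" by auto
          show "i' \<in> ?M"
          proof (rule ccontr)
            assume "i' \<notin> ?M"
            hence lt: "tt i' < tt j" using c cell_tt_ne[OF c(1)] by auto
            hence "W i' j" using c by (auto simp: W_def T0_def)
            hence "s \<le> tt i'" using mn by blast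
            with tj lt show False by simp
          qed
        qed
        have "tt j < tt i" using mn[OF Wij] tj nij by simp
        hence "i \<in> ?M" "T i j" using cij Wij by (auto simp: W_def T0_def)
        thus "?L \<noteq> ?M" by blast
      qed
      hence "card ?L < card ?M" by (rule psubset_card_mono[OF finite_subset[OF _ fin_col[of RR n j]], rotated]) auto
      thus False using col[OF j1 jR] part_col[OF j1] by simp
    qed
  qed
qed

lemma minrec_eq: "minrec n \<pi> = c0"
proof -
  have "(THE T. T \<in> EWtab RR n \<and> Psi RR n T = \<pi>) = T0"
  proof (rule the_equality)
    show "T0 \<in> EWtab RR n \<and> Psi RR n T0 = \<pi>" using T0_EW Psi_T0 by blast
  next
    fix T assume "T \<in> EWtab RR n \<and> Psi RR n T = \<pi>"
    thus "T = T0" using uniq by blast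
  qed
  thus ?thesis by (simp add: minrec_def)
qed

lemma A_iff: "j \<in> A_block \<pi> k \<longleftrightarrow> j \<in> {1..n} \<and> tt j + 1 = 2*k"
proof -
  have "j \<in> A_block \<pi> k \<longleftrightarrow> (\<exists>p<n. \<pi>!p = j \<and> asc_top \<pi> p \<and> rc p div 2 + 1 = k)"
    using len by (auto simp: A_block_def)
  also have "\<dots> \<longleftrightarrow> j \<in> {1..n} \<and> asc_top \<pi> (pos j) \<and> rc (pos j) div 2 + 1 = k"
    using pos_lt pos_nth nth_in by metis
  also have "\<dots> \<longleftrightarrow> j \<in> {1..n} \<and> tt j + 1 = 2*k"
    by (auto simp: tt_def asc_even) presburger+
  finally show ?thesis .
qed

lemma D_iff: "j \<in> D_block \<pi> k \<longleftrightarrow> (k = 0 \<and> j = 0) \<or> (k \<ge> 1 \<and> j \<in> {1..n} \<and> tt j = 2*k)"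
proof (cases "k = 0")
  case True thus ?thesis by (simp add: D_block_def)
next
  case False
  have "j \<in> D_block \<pi> k \<longleftrightarrow> (\<exists>p<n. \<pi>!p = j \<and> \<not> asc_top \<pi> p \<and> (rc p + 1) div 2 = k)"
    using len False by (auto simp: D_block_def)
  also have "\<dots> \<longleftrightarrow> j \<in> {1..n} \<and> \<not> asc_top \<pi> (pos j) \<and> (rc (pos j) + 1) div 2 = k"
    using pos_lt pos_nth nth_in by metis
  also have "\<dots> \<longleftrightarrow> j \<in> {1..n} \<and> tt j = 2*k"
    using False by (auto simp: tt_def asc_even) presburger+
  finally show ?thesis using False by simp
qed

lemma main:
  assumes i: "i \<in> {1..n}"
  shows "(\<forall>l. i \<in> D_block \<pi> l \<longrightarrow>
        minrec n \<pi> i = card {j. j > i \<and> (\<exists>k > l. j \<in> A_block \<pi> k)})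
   \<and> (\<forall>l. i \<in> A_block \<pi> l \<longrightarrow>
        minrec n \<pi> i = card {j. j < i \<and> (\<exists>k \<ge> l. j \<in> D_block \<pi> k)})"
proof (intro conjI allI impI)
  fix l assume "i \<in> D_block \<pi> l"
  hence l: "l \<ge> 1" "tt i = 2*l" using D_iff i by auto
  hence iR: "i \<in> RR" using R_iff[OF i] by simp
  have "{j. cell RR n i j \<and> T0 i j} = {j. j > i \<and> (\<exists>k > l. j \<in> A_block \<pi> k)}"
  proof (intro set_eqI iffI)
    fix j assume h: "j \<in> {j. cell RR n i j \<and> T0 i j}"
    hence c: "cell RR n i j" "tt i < tt j" by (auto simp: T0_def)
    have j1: "j \<in> {1..n}" "odd (tt j)" using cell_col[OF c(1)] by auto
    have "j \<in> A_block \<pi> ((tt j + 1) div 2)" using A_iff j1 by simp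
    moreover have "(tt j + 1) div 2 > l" using c(2) l j1(2) by presburger
    ultimately show "j \<in> {j. j > i \<and> (\<exists>k > l. j \<in> A_block \<pi> k)}" using c by (auto simp: cell_def)
  next
    fix j assume "j \<in> {j. j > i \<and> (\<exists>k > l. j \<in> A_block \<pi> k)}"
    then obtain k where k: "j > i" "k > l" "j \<in> A_block \<pi> k" by auto
    hence j1: "j \<in> {1..n}" "tt j + 1 = 2*k" using A_iff by auto
    hence "j \<in> fcols RR n" using C_iff by presburger
    moreover have "tt i < tt j" using l k j1 by linarith
    ultimately show "j \<in> {j. cell RR n i j \<and> T0 i j}" using iR k by (simp add: T0_def cell_def)
  qed
  thus "minrec n \<pi> i = card {j. j > i \<and> (\<exists>k > l. j \<in> A_block \<pi> k)}"
    using i iR by (simp add: minrec_eq phi_TC_def)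
next
  fix l assume "i \<in> A_block \<pi> l"
  hence l: "tt i + 1 = 2*l" using A_iff i by auto
  hence ic: "i \<in> fcols RR n" using C_iff[OF i] by presburger
  hence iR: "i \<notin> RR" by (simp add: fcols_def)
  have "{r. cell RR n r i \<and> \<not> T0 r i} = {j. j < i \<and> (\<exists>k \<ge> l. j \<in> D_block \<pi> k)}"
  proof (intro set_eqI iffI)
    fix r assume "r \<in> {r. cell RR n r i \<and> \<not> T0 r i}"
    hence c0: "cell RR n r i" "\<not> tt r < tt i" by (auto simp: T0_def)
    hence c: "cell RR n r i" "tt i < tt r" using cell_tt_ne[of r i] by auto
    have r0: "r \<noteq> 0"
    proof
      assume "r = 0" with c(2) tt0 show False by simp
    qed
    have r1: "r \<in> {1..n}" "even (tt r)" using cell_row[OF c(1) r0] by auto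
    have "r \<in> D_block \<pi> (tt r div 2)" using D_iff r1 c(2) by auto
    moreover have "tt r div 2 \<ge> l" using c(2) l r1(2) by presburger
    ultimately show "r \<in> {j. j < i \<and> (\<exists>k \<ge> l. j \<in> D_block \<pi> k)}" using c by (auto simp: cell_def)
  next
    fix j assume "j \<in> {j. j < i \<and> (\<exists>k \<ge> l. j \<in> D_block \<pi> k)}"
    then obtain k where k: "j < i" "k \<ge> l" "j \<in> D_block \<pi> k" by auto
    have l1: "l \<ge> 1" using l by simp
    hence j1: "j \<in> {1..n}" "tt j = 2*k" using D_iff k by auto
    hence "j \<in> RR" using R_iff by simp
    moreover have "tt i < tt j" using l k j1 by linarith
    ultimately show "j \<in> {r. cell RR n r i \<and> \<not> T0 r i}" using ic k by (simp add: T0_def cell_def)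
  qed
  thus "minrec n \<pi> i = card {j. j < i \<and> (\<exists>k \<ge> l. j \<in> D_block \<pi> k)}"
    using i iR by (simp add: minrec_eq phi_TC_def)
qed

end

theorem lemma5p6:
  fixes n :: nat and \<pi> :: "nat list"
  assumes "distinct \<pi>" and "set \<pi> = {1..n}"
  shows "\<forall>i \<in> {1..n}.
     (\<forall>l. i \<in> D_block \<pi> l \<longrightarrow>
        minrec n \<pi> i = card {j. j > i \<and> (\<exists>k > l. j \<in> A_block \<pi> k)})
   \<and> (\<forall>l. i \<in> A_block \<pi> l \<longrightarrow>
        minrec n \<pi> i = card {j. j < i \<and> (\<exists>k \<ge> l. j \<in> D_block \<pi> k)})"
proof -
  interpret perm n \<pi> using assms by unfold_locales
  show ?thesis using main by blast
qed

end
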